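(* Let $K(x,y)$ be a real kernel on $\{x\ne y\}\subset\mathbb R^2$ with $|K(x,y)|\le C|x-y|^{-1}$, differentiable in $x$ with $\partial_xK(x,y)\ge c\,(x-y)^{-2}$ for all $x\ne y$, for some $c>0$. Let $J$ be a bounded interval with center $c_J$, $\omega$ a positive Borel measure with $0<\omega(J)<\infty$, and $\mu$ a finite positive Borel measure whose support is disjoint from the closure of $J$; set $T\mu(x)=\int K(x,y)\,d\mu(y)$ for $x\in J$. Then $$\int_J\int_J|T\mu(x)-T\mu(z)|^2\,d\omega(x)\,d\omega(z)\ \ge\ \frac{c^2}{8}\Big(\frac{\mathrm P(J,\mu)}{|J|}\Big)^2\,\omega(J)\int_J\big|x-\mathbb E^\omega_J x\big|^2\,d\omega(x),$$ where $\mathbb E^\omega_Jx=\omega(J)^{-1}\int_Jx\,d\omega(x)$.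
   Context: $\mathrm P(J,\mu)=\int_{\mathbb R}\frac{|J|}{(|J|+\operatorname{dist}(y,J))^2}\,d\mu(y)$. *)

theory Defs
  imports "HOL-Analysis.Analysis"
begin

definition intlen :: "real set \<Rightarrow> real" where
  "intlen J = measure lborel J"

definition msupport :: "real measure \<Rightarrow> real set" where
  "msupport \<mu> = {x. \<forall>e>0. emeasure \<mu> (ball x e) > 0}"

definition poissonP :: "real set \<Rightarrow> real measure \<Rightarrow> real" where
  "poissonP J \<mu> = (\<integral>y. intlen J / (intlen J + infdist y J)\<^sup>2 \<partial>\<mu>)"

end

theory Submission
  imports Defs
begin

lemma supp_away:
  fixes \<mu> :: "real measure" and S :: "real set"
  assumes sets: "sets \<mu> = sets borel" and S: "compact S" and supp: "msupport \<mu> \<inter> S = {}"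
  shows "\<exists>\<delta>>0. AE y in \<mu>. \<forall>x\<in>S. \<delta> \<le> dist x y"
proof -
  define \<G> where "\<G> = {ball p e | p e. emeasure \<mu> (ball p e) = 0}"
  have "S \<subseteq> \<Union>\<G>"
  proof
    fix x assume "x \<in> S"
    then have "x \<notin> msupport \<mu>" using supp by blast
    then obtain e where "e > 0" "\<not> emeasure \<mu> (ball x e) > 0" unfolding msupport_def by auto
    then have "ball x e \<in> \<G>" unfolding \<G>_def by (auto simp: zero_less_iff_neq_zero)
    with \<open>e>0\<close> show "x \<in> \<Union>\<G>" by (metis UnionI centre_in_ball)
  qed
  moreover have "\<And>G. G \<in> \<G> \<Longrightarrow> open G" unfolding \<G>_def by auto
  ultimately obtain \<epsilon> where eps: "0 < \<epsilon>" "\<And>x. x \<in> S \<Longrightarrow> \<exists>G \<in> \<G>. ball x \<epsilon> \<subseteq> G"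
    using Heine_Borel_lemma[OF S] by metis
  have "S \<subseteq> (\<Union>q\<in>S. ball q (\<epsilon>/2))" using eps(1) by auto
  then obtain F where F: "F \<subseteq> S" "finite F" "S \<subseteq> (\<Union>q\<in>F. ball q (\<epsilon>/2))"
    using compactE_image[OF S, of S "\<lambda>q. ball q (\<epsilon>/2)"] by auto
  have "AE y in \<mu>. \<forall>q\<in>F. y \<notin> ball q \<epsilon>"
  proof (rule AE_finite_allI[OF F(2)])
    fix q assume "q \<in> F"
    then obtain G where G: "G \<in> \<G>" "ball q \<epsilon> \<subseteq> G" using eps F by blast
    then obtain p e where pe: "G = ball p e" "emeasure \<mu> (ball p e) = 0" unfolding \<G>_def by auto
    have "ball q \<epsilon> \<in> null_sets \<mu>"
      by (rule null_sets_subset[of G]) (use pe G sets in \<open>auto simp: null_sets_def\<close>)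
    then show "AE y in \<mu>. y \<notin> ball q \<epsilon>" by (rule AE_not_in)
  qed
  then have "AE y in \<mu>. \<forall>x\<in>S. \<epsilon>/2 \<le> dist x y"
  proof (rule AE_mp, intro AE_I2 impI ballI)
    fix y x assume H: "\<forall>q\<in>F. y \<notin> ball q \<epsilon>" "x \<in> S"
    then obtain q where q: "q \<in> F" "dist q x < \<epsilon>/2" using F(3) by auto
    have "\<epsilon> \<le> dist q y" using H q by auto
    moreover have "dist q y \<le> dist q x + dist x y" by (rule dist_triangle)
    ultimately show "\<epsilon>/2 \<le> dist x y" using q by linarith
  qed
  then show ?thesis using eps(1) by (intro exI[of _ "\<epsilon>/2"]) auto
qed


lemma interval_facts:
  fixes J :: "real set"
  assumes J: "is_interval J" "bounded J" "J \<noteq> {}"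
  shows "J \<subseteq> {Inf J..Sup J}" "{Inf J<..<Sup J} \<subseteq> J" "J \<in> sets borel"
    "intlen J = Sup J - Inf J" "Inf J \<le> Sup J"
proof -
  have ba: "bdd_above J" "bdd_below J" using J(2) by (auto intro: bounded_imp_bdd_above bounded_imp_bdd_below)
  show sub: "J \<subseteq> {Inf J..Sup J}" using ba by (auto intro: cInf_lower cSup_upper)
  then show le: "Inf J \<le> Sup J" using J(3) by auto
  show sub2: "{Inf J<..<Sup J} \<subseteq> J"
  proof
    fix t assume "t \<in> {Inf J<..<Sup J}"
    then have "Inf J < t" "t < Sup J" by auto
    then obtain p q where "p \<in> J" "p < t" "q \<in> J" "t < q"
      using cInf_less_iff[OF J(3) ba(2)] less_cSup_iff[OF J(3) ba(1)] by metis
    then show "t \<in> J" using J(1) unfolding is_interval_1 by (meson less_imp_le)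
  qed
  have eq: "J = {Inf J<..<Sup J} \<union> (J \<inter> {Inf J, Sup J})" using sub sub2 by auto
  have "J \<inter> {Inf J, Sup J} \<in> sets borel" by (intro borel_closed finite_imp_closed) auto
  then show "J \<in> sets borel" by (subst eq) auto
  then have "emeasure lborel {Inf J<..<Sup J} \<le> emeasure lborel J" "emeasure lborel J \<le> emeasure lborel {Inf J..Sup J}"
    using sub sub2 by (auto intro!: emeasure_mono)
  then have "emeasure lborel J = ennreal (Sup J - Inf J)" using le by (auto intro: antisym)
  then show "intlen J = Sup J - Inf J" unfolding intlen_def measure_def using le by simp
qed


lemma ind_integrable:
  fixes \<omega> :: "real measure" and g :: "real \<Rightarrow> real"
  assumes "sets \<omega> = sets borel" "J \<in> sets borel" "emeasure \<omega> J < \<infinity>"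
    "(\<lambda>z. indicator J z * g z) \<in> borel_measurable borel" "\<And>z. z \<in> J \<Longrightarrow> \<bar>g z\<bar> \<le> B"
  shows "integrable \<omega> (\<lambda>z. indicator J z * g z)"
proof (rule Bochner_Integration.integrable_bound[where f="\<lambda>z. B * indicator J z"])
  show "integrable \<omega> (\<lambda>z. B * indicator J z)" using assms(1-3) by (intro integrable_mult_right integrable_real_indicator) auto
  show "(\<lambda>z. indicator J z * g z) \<in> borel_measurable \<omega>" by (subst measurable_cong_sets[OF assms(1) refl]) (rule assms(4))
  show "AE z in \<omega>. norm (indicator J z * g z) \<le> norm (B * indicator J z)"
  proof (rule AE_I2)
    fix z
    show "norm (indicator J z * g z) \<le> norm (B * indicator J z)"
    proof (cases "z \<in> J")
      case True
      then have "\<bar>g z\<bar> \<le> B" by (rule assms(5))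
      then show ?thesis using True by simp
    qed simp
  qed
qed

lemma var_min:
  fixes \<omega> :: "real measure" and J :: "real set"
  assumes sw: "sets \<omega> = sets borel" and J: "J \<in> sets borel" "emeasure \<omega> J < \<infinity>" "J \<subseteq> {a..b}"
    and m: "measure \<omega> J > 0"
  shows "(\<integral>z. indicator J z * (z - (\<integral>t. indicator J t * t \<partial>\<omega>) / measure \<omega> J)\<^sup>2 \<partial>\<omega>)
     \<le> (\<integral>z. indicator J z * (z - x)\<^sup>2 \<partial>\<omega>)"
proof -
  define m where "m = measure \<omega> J"
  define I where "I = (\<integral>t. indicator J t * t \<partial>\<omega>)"
  define E where "E = I / m"
  have bnd: "\<And>z. z \<in> J \<Longrightarrow> \<bar>z\<bar> \<le> \<bar>a\<bar> + \<bar>b\<bar>" using J(3) by force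
  have int1: "integrable \<omega> (\<lambda>z. indicator J z * z)"
    by (rule ind_integrable[OF sw J(1,2) _ bnd]) (use J(1) in \<open>intro borel_measurable_times borel_measurable_indicator borel_measurable_continuous_onI continuous_intros, auto\<close>)
  have int0: "integrable \<omega> (\<lambda>z. indicator J z :: real)" using J sw by auto
  have intp: "\<And>u. integrable \<omega> (\<lambda>z. indicator J z * (z - u)\<^sup>2)"
  proof -
    fix u
    have b: "\<And>z. z \<in> J \<Longrightarrow> \<bar>(z - u)\<^sup>2\<bar> \<le> (\<bar>a\<bar> + \<bar>b\<bar> + \<bar>u\<bar>)\<^sup>2"
    proof -
      fix z assume "z \<in> J"
      then have "\<bar>z - u\<bar> \<le> \<bar>\<bar>a\<bar> + \<bar>b\<bar> + \<bar>u\<bar>\<bar>" using bnd[of z] by linarith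
      then have "(z - u)\<^sup>2 \<le> (\<bar>a\<bar> + \<bar>b\<bar> + \<bar>u\<bar>)\<^sup>2" by (simp only: abs_le_square_iff)
      then show "\<bar>(z - u)\<^sup>2\<bar> \<le> (\<bar>a\<bar> + \<bar>b\<bar> + \<bar>u\<bar>)\<^sup>2" by simp
    qed
    show "integrable \<omega> (\<lambda>z. indicator J z * (z - u)\<^sup>2)"
      by (rule ind_integrable[OF sw J(1,2) _ b]) (use J(1) in \<open>intro borel_measurable_times borel_measurable_indicator borel_measurable_continuous_onI continuous_intros, auto\<close>)
  qed
  have eqz: "\<And>z. indicator J z * (z - x)\<^sup>2 - indicator J z * (z - E)\<^sup>2
      = (2*(E-x)) * (indicator J z * z) - ((E-x)*(x+E)) * indicator J z"
    by (simp add: power2_eq_square algebra_simps)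
  have "(\<integral>z. indicator J z * (z - x)\<^sup>2 \<partial>\<omega>) - (\<integral>z. indicator J z * (z - E)\<^sup>2 \<partial>\<omega>)
     = (\<integral>z. indicator J z * (z - x)\<^sup>2 - indicator J z * (z - E)\<^sup>2 \<partial>\<omega>)"
    by (rule Bochner_Integration.integral_diff[symmetric, OF intp intp])
  also have "\<dots> = (\<integral>z. (2*(E-x)) * (indicator J z * z) - ((E-x)*(x+E)) * indicator J z \<partial>\<omega>)"
    by (simp only: eqz)
  also have "\<dots> = (\<integral>z. (2*(E-x)) * (indicator J z * z) \<partial>\<omega>) - (\<integral>z. ((E-x)*(x+E)) * indicator J z \<partial>\<omega>)"
    by (rule Bochner_Integration.integral_diff[OF integrable_mult_right[OF int1] integrable_mult_right[OF int0]])
  also have "\<dots> = (2*(E-x)) * I - ((E-x)*(x+E)) * m"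
    unfolding I_def m_def using Bochner_Integration.integral_indicator[where A=J and M=\<omega>] J(1,2) sw by simp
  finally have d: "(\<integral>z. indicator J z * (z - x)\<^sup>2 \<partial>\<omega>) - (\<integral>z. indicator J z * (z - E)\<^sup>2 \<partial>\<omega>) = (2*(E-x)) * I - ((E-x)*(x+E)) * m" .
  have IE: "I = E * m" unfolding E_def using m unfolding m_def by simp
  have "(2*(E-x)) * I - ((E-x)*(x+E)) * m = m * (E - x)\<^sup>2"
    unfolding IE by (simp add: power2_eq_square algebra_simps)
  moreover have "m * (E - x)\<^sup>2 \<ge> 0" using m unfolding m_def by simp
  ultimately show ?thesis using d unfolding E_def I_def m_def by linarith
qed

lemma ind_sq_int:
  fixes \<omega> :: "real measure" and J :: "real set"
  assumes sw: "sets \<omega> = sets borel" and J: "J \<in> sets borel" "emeasure \<omega> J < \<infinity>" "J \<subseteq> {a..b}"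
  shows "integrable \<omega> (\<lambda>z. indicator J z * (z - u)\<^sup>2)"
proof -
  have bnd: "\<And>z. z \<in> J \<Longrightarrow> \<bar>z\<bar> \<le> \<bar>a\<bar> + \<bar>b\<bar>" using J(3) by force
  have b: "\<And>z. z \<in> J \<Longrightarrow> \<bar>(z - u)\<^sup>2\<bar> \<le> (\<bar>a\<bar> + \<bar>b\<bar> + \<bar>u\<bar>)\<^sup>2"
  proof -
    fix z assume "z \<in> J"
    then have "\<bar>z - u\<bar> \<le> \<bar>\<bar>a\<bar> + \<bar>b\<bar> + \<bar>u\<bar>\<bar>" using bnd[of z] by linarith
    then have "(z - u)\<^sup>2 \<le> (\<bar>a\<bar> + \<bar>b\<bar> + \<bar>u\<bar>)\<^sup>2" by (simp only: abs_le_square_iff)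
    then show "\<bar>(z - u)\<^sup>2\<bar> \<le> (\<bar>a\<bar> + \<bar>b\<bar> + \<bar>u\<bar>)\<^sup>2" by simp
  qed
  show ?thesis
    by (rule ind_integrable[OF sw J(1,2) _ b]) (use J(1) in \<open>intro borel_measurable_times borel_measurable_indicator borel_measurable_continuous_onI continuous_intros, auto\<close>)
qed

theorem mainTheorem11:
  fixes K Kx :: "real \<Rightarrow> real \<Rightarrow> real"
    and C c :: real
    and J :: "real set"
    and \<omega> \<mu> :: "real measure"
  assumes K_bound: "\<And>x y. x \<noteq> y \<Longrightarrow> \<bar>K x y\<bar> \<le> C / \<bar>x - y\<bar>"
    and K_deriv: "\<And>x y. x \<noteq> y \<Longrightarrow> ((\<lambda>t. K t y) has_real_derivative Kx x y) (at x)"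
    and Kx_lower: "\<And>x y. x \<noteq> y \<Longrightarrow> Kx x y \<ge> c / (x - y)\<^sup>2"
    and c_pos: "c > 0"
    and K_meas: "\<And>x. (\<lambda>y. K x y) \<in> borel_measurable borel"
    and J_int: "is_interval J" and J_bdd: "bounded J"
    and \<omega>_sets: "sets \<omega> = sets borel"
    and \<omega>J_pos: "emeasure \<omega> J > 0" and \<omega>J_fin: "emeasure \<omega> J < \<infinity>"
    and \<mu>_sets: "sets \<mu> = sets borel"
    and \<mu>_fin: "finite_measure \<mu>"
    and supp: "msupport \<mu> \<inter> closure J = {}"
  shows "(LINT x:J|\<omega>. (LINT z:J|\<omega>. ((\<integral>y. K x y \<partial>\<mu>) - (\<integral>y. K z y \<partial>\<mu>))\<^sup>2))
      \<ge> c\<^sup>2 / 8 * (poissonP J \<mu> / intlen J)\<^sup>2 * measure \<omega> J *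
         (LINT x:J|\<omega>. (x - (LINT t:J|\<omega>. t) / measure \<omega> J)\<^sup>2)"
proof -
  have Jne: "J \<noteq> {}" using \<omega>J_pos by auto
  note IF = interval_facts[OF J_int J_bdd Jne]
  define a where "a = Inf J"
  define b where "b = Sup J"
  have Jsub: "J \<subseteq> {a..b}" and Jborel: "J \<in> sets borel" and L_eq: "intlen J = b - a" and ab: "a \<le> b"
    using IF unfolding a_def b_def by auto
  define L where "L = intlen J"
  define m where "m = measure \<omega> J"
  have m_pos: "m > 0" using \<omega>J_pos \<omega>J_fin unfolding m_def measure_def by (simp add: enn2real_positive_iff)
  define T where "T x = (\<integral>y. K x y \<partial>\<mu>)" for x
  define V where "V = (\<integral>x. indicator J x * (x - (\<integral>t. indicator J t * t \<partial>\<omega>) / m)\<^sup>2 \<partial>\<omega>)"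
  define LHS where "LHS = (\<integral>x. indicator J x * (\<integral>z. indicator J z * (T x - T z)\<^sup>2 \<partial>\<omega>) \<partial>\<omega>)"
  have eqL: "(LINT x:J|\<omega>. (LINT z:J|\<omega>. ((\<integral>y. K x y \<partial>\<mu>) - (\<integral>y. K z y \<partial>\<mu>))\<^sup>2)) = LHS"
    unfolding LHS_def T_def by (simp add: set_lebesgue_integral_def)
  have eqR: "(LINT x:J|\<omega>. (x - (LINT t:J|\<omega>. t) / measure \<omega> J)\<^sup>2) = V"
    unfolding V_def m_def by (simp add: set_lebesgue_integral_def)
  have V_nonneg: "V \<ge> 0" unfolding V_def by (intro integral_nonneg_AE AE_I2) auto
  have LHS_nonneg: "LHS \<ge> 0" unfolding LHS_def
    by (intro integral_nonneg_AE AE_I2 mult_nonneg_nonneg integral_nonneg_AE) auto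
  show ?thesis
  proof (cases "L = 0")
    case True
    then show ?thesis using LHS_nonneg unfolding eqL L_def by simp
  next
    case False
    then have L_pos: "L > 0" using L_eq ab unfolding L_def by simp
    have L_ba: "L = b - a" using L_eq unfolding L_def .
    have Jw: "J \<in> sets \<omega>" using Jborel \<omega>_sets by simp
    obtain \<delta> where \<delta>: "\<delta> > 0" and AEc: "AE y in \<mu>. \<forall>x\<in>closure J. \<delta> \<le> dist x y"
      using supp_away[OF \<mu>_sets _ supp] J_bdd by auto
    have AEJ: "AE y in \<mu>. \<forall>x\<in>J. \<delta> \<le> dist x y"
      using AEc by eventually_elim (use closure_subset in blast)
    interpret \<mu>f: finite_measure \<mu> by (rule \<mu>_fin)
    define B where "B = \<bar>C\<bar> / \<delta>"
    have Kb: "AE y in \<mu>. \<bar>K x y\<bar> \<le> B" if x: "x \<in> J" for x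
      using AEJ
    proof eventually_elim
      case (elim y)
      then have d: "\<delta> \<le> \<bar>x - y\<bar>" using x by (auto simp: dist_real_def)
      then have xy: "x \<noteq> y" using \<delta> by auto
      have "\<bar>K x y\<bar> \<le> C / \<bar>x - y\<bar>" by (rule K_bound[OF xy])
      also have "\<dots> \<le> \<bar>C\<bar> / \<bar>x - y\<bar>" by (rule divide_right_mono) auto
      also have "\<dots> \<le> \<bar>C\<bar> / \<delta>" by (rule divide_left_mono) (use d \<delta> in auto)
      finally show ?case unfolding B_def .
    qed
    have Kmeas: "(\<lambda>y. K x y) \<in> borel_measurable \<mu>" for x
      by (subst measurable_cong_sets[OF \<mu>_sets refl]) (rule K_meas)
    have Kint: "integrable \<mu> (\<lambda>y. K x y)" if "x \<in> J" for x
      by (rule \<mu>f.integrable_const_bound[OF _ Kmeas]) (use Kb[OF that] in simp)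
    define TB where "TB = B * measure \<mu> (space \<mu>)"
    have Tb: "\<bar>T x\<bar> \<le> TB" if x: "x \<in> J" for x
    proof -
      have "\<bar>T x\<bar> \<le> (\<integral>y. \<bar>K x y\<bar> \<partial>\<mu>)" unfolding T_def by (rule integral_abs_bound)
      also have "\<dots> \<le> (\<integral>y. B \<partial>\<mu>)"
        by (rule integral_mono_AE) (use Kint[OF x] Kb[OF x] in auto)
      also have "\<dots> = TB" unfolding TB_def by simp
      finally show ?thesis .
    qed
    have TB_nonneg: "TB \<ge> 0" using Tb[of a] Jne Tb by (meson abs_ge_zero all_not_in_conv order_trans)
    define d where "d y = 1 / (L + infdist y J)\<^sup>2" for y
    have d_pos: "d y > 0" for y unfolding d_def using L_pos infdist_nonneg[of y J]
      by (intro divide_pos_pos) auto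
    have d_le: "d y \<le> 1 / L\<^sup>2" for y unfolding d_def
    proof (rule divide_left_mono)
      show "L\<^sup>2 \<le> (L + infdist y J)\<^sup>2" using L_pos infdist_nonneg[of y J] by (intro power_mono) auto
    qed (use L_pos infdist_nonneg[of y J] in auto)
    have dmeas: "d \<in> borel_measurable \<mu>"
    proof (subst measurable_cong_sets[OF \<mu>_sets refl])
      show "d \<in> borel_measurable borel" unfolding d_def
        using L_pos infdist_nonneg[of _ J]
        by (intro borel_measurable_continuous_onI continuous_intros) (auto, metis add_pos_nonneg infdist_nonneg order_less_irrefl)
    qed
    have dint: "integrable \<mu> d"
      by (rule \<mu>f.integrable_const_bound[OF _ dmeas, where B="1 / L\<^sup>2"]) (use d_pos d_le in \<open>auto intro!: AE_I2 simp: less_imp_le\<close>)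
    define Q where "Q = (\<integral>y. d y \<partial>\<mu>)"
    have Q_nonneg: "Q \<ge> 0" unfolding Q_def using d_pos by (intro integral_nonneg_AE AE_I2) (simp add: less_imp_le)
    have P_eq: "poissonP J \<mu> = L * Q"
    proof -
      have "poissonP J \<mu> = (\<integral>y. L * d y \<partial>\<mu>)" unfolding poissonP_def d_def L_def by simp
      then show ?thesis unfolding Q_def by simp
    qed
    define A where "A = c * Q"
    have A_nonneg: "A \<ge> 0" unfolding A_def using c_pos Q_nonneg by simp
    have key: "c * (x - z) * Q \<le> T x - T z" if xz: "x \<in> J" "z \<in> J" "z < x" for x z
    proof -
      have "T x - T z = (\<integral>y. K x y - K z y \<partial>\<mu>)"
        unfolding T_def by (rule Bochner_Integration.integral_diff[symmetric, OF Kint[OF xz(1)] Kint[OF xz(2)]])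
      moreover have "c * (x - z) * Q = (\<integral>y. c * (x - z) * d y \<partial>\<mu>)" unfolding Q_def by simp
      moreover have "(\<integral>y. c * (x - z) * d y \<partial>\<mu>) \<le> (\<integral>y. K x y - K z y \<partial>\<mu>)"
      proof (rule integral_mono_AE)
        show "integrable \<mu> (\<lambda>y. c * (x - z) * d y)" using dint by simp
        show "integrable \<mu> (\<lambda>y. K x y - K z y)" using Kint[OF xz(1)] Kint[OF xz(2)] by simp
        show "AE y in \<mu>. c * (x - z) * d y \<le> K x y - K z y"
          using AEJ
        proof eventually_elim
          case (elim y)
          have inJ: "t \<in> J" if "z \<le> t" "t \<le> x" for t
            using J_int xz that unfolding is_interval_1 by blast
          have ny: "t \<noteq> y" if "t \<in> J" for t using elim that \<delta> by force
          have "\<forall>t. z \<le> t \<and> t \<le> x \<longrightarrow> ((\<lambda>t. K t y) has_real_derivative Kx t y) (at t)"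
            using K_deriv inJ ny by blast
          then obtain \<xi> where \<xi>: "z < \<xi>" "\<xi> < x" "K x y - K z y = (x - z) * Kx \<xi> y"
            using MVT2[OF xz(3), of "\<lambda>t. K t y" "\<lambda>t. Kx t y"] by blast
          have \<xi>J: "\<xi> \<in> J" using inJ \<xi> by simp
          have \<xi>y: "\<xi> \<noteq> y" by (rule ny[OF \<xi>J])
          have "\<bar>\<xi> - y\<bar> - L \<le> (INF w\<in>J. dist y w)"
          proof (rule cINF_greatest[OF Jne])
            fix w assume w: "w \<in> J"
            have "\<bar>\<xi> - w\<bar> \<le> L" using subsetD[OF Jsub w] subsetD[OF Jsub \<xi>J] L_ba by auto
            then show "\<bar>\<xi> - y\<bar> - L \<le> dist y w" by (auto simp: dist_real_def)
          qed
          then have le1: "\<bar>\<xi> - y\<bar> \<le> L + infdist y J" unfolding infdist_def using Jne by simp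
          have "(\<xi> - y)\<^sup>2 \<le> (L + infdist y J)\<^sup>2"
            using le1 L_pos infdist_nonneg[of y J] by (simp add: abs_le_square_iff[symmetric])
          have "(\<xi> - y)\<^sup>2 > 0" using \<xi>y by simp
          have "c / (L + infdist y J)\<^sup>2 \<le> c / (\<xi> - y)\<^sup>2"
          proof (rule divide_left_mono)
            have "L + infdist y J > 0" using L_pos infdist_nonneg[of y J] by linarith
            then show "0 < (L + infdist y J)\<^sup>2 * (\<xi> - y)\<^sup>2" using \<open>(\<xi> - y)\<^sup>2 > 0\<close> by simp
          qed (use c_pos \<open>(\<xi> - y)\<^sup>2 \<le> (L + infdist y J)\<^sup>2\<close> in auto)
          also have "\<dots> \<le> Kx \<xi> y" by (rule Kx_lower[OF \<xi>y])
          finally have "c * d y \<le> Kx \<xi> y" unfolding d_def by simp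
          then have "(x - z) * (c * d y) \<le> (x - z) * Kx \<xi> y" using xz(3) by (intro mult_left_mono) auto
          then show ?case using \<xi>(3) by (simp add: ac_simps)
        qed
      qed
      ultimately show ?thesis by linarith
    qed
    have absk: "A * \<bar>x - z\<bar> \<le> \<bar>T x - T z\<bar>" if "x \<in> J" "z \<in> J" for x z
    proof (cases x z rule: linorder_cases)
      case less
      with key[of z x] that show ?thesis unfolding A_def by (simp add: abs_if ac_simps)
    next
      case equal then show ?thesis by simp
    next
      case greater
      with key[of x z] that show ?thesis unfolding A_def by (simp add: abs_if ac_simps)
    qed
    have sqk: "A\<^sup>2 * (z - x)\<^sup>2 \<le> (T x - T z)\<^sup>2" if "x \<in> J" "z \<in> J" for x z
    proof -
      have "(A * \<bar>x - z\<bar>)\<^sup>2 \<le> \<bar>T x - T z\<bar>\<^sup>2"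
        using absk[OF that] A_nonneg by (intro power_mono) auto
      then show ?thesis by (simp add: power_mult_distrib power2_commute)
    qed
    have monoT: "mono_on J T"
    proof (rule mono_onI)
      fix r s assume rs: "r \<in> J" "s \<in> J" "r \<le> s"
      show "T r \<le> T s"
      proof (cases "r = s")
        case False
        then have "r < s" using rs by simp
        have "0 \<le> c * (s - r) * Q" using c_pos Q_nonneg \<open>r < s\<close> by simp
        with key[OF rs(2,1) \<open>r < s\<close>] show ?thesis by linarith
      qed simp
    qed
    have TTmeas: "(\<lambda>x. indicator J x * T x) \<in> borel_measurable borel"
    proof -
      have "T \<in> borel_measurable (restrict_space borel J)" by (rule borel_measurable_mono_on_fnc[OF monoT])
      then have "(\<lambda>x. indicator J x *\<^sub>R T x) \<in> borel_measurable borel"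
        by (subst borel_measurable_restrict_space_iff[symmetric]) (use Jborel in auto)
      then show ?thesis by simp
    qed
    have hmeas: "(\<lambda>z. indicator J z * h (T z)) \<in> borel_measurable borel"
      if h: "h \<in> borel_measurable borel" for h :: "real \<Rightarrow> real"
    proof -
      have "(\<lambda>z. indicator J z * h (T z)) = (\<lambda>z. indicator J z * h (indicator J z * T z))"
        by (rule ext) (simp add: indicator_def)
      moreover have "(\<lambda>z. indicator J z * h (indicator J z * T z)) \<in> borel_measurable borel"
        by (intro borel_measurable_times borel_measurable_indicator[OF Jborel] measurable_compose[OF TTmeas h])
      ultimately show ?thesis by simp
    qed
    have Fint: "integrable \<omega> (\<lambda>z. indicator J z * (T x - T z)\<^sup>2)" if x: "x \<in> J" for x
    proof (rule ind_integrable[OF \<omega>_sets Jborel \<omega>J_fin, where B="(2*TB)\<^sup>2"])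
      show "(\<lambda>z. indicator J z * (T x - T z)\<^sup>2) \<in> borel_measurable borel"
        by (rule hmeas[of "\<lambda>t. (T x - t)\<^sup>2"]) (intro borel_measurable_continuous_onI continuous_intros)
      fix z assume z: "z \<in> J"
      have "\<bar>T x - T z\<bar> \<le> \<bar>2*TB\<bar>" using Tb[OF x] Tb[OF z] by linarith
      then have "(T x - T z)\<^sup>2 \<le> (2*TB)\<^sup>2" by (simp only: abs_le_square_iff)
      then show "\<bar>(T x - T z)\<^sup>2\<bar> \<le> (2*TB)\<^sup>2" by simp
    qed
    have intT: "integrable \<omega> (\<lambda>z. indicator J z * T z)"
    proof (rule ind_integrable[OF \<omega>_sets Jborel \<omega>J_fin _ Tb])
      show "(\<lambda>z. indicator J z * T z) \<in> borel_measurable borel" by (rule TTmeas)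
    qed
    have intT2: "integrable \<omega> (\<lambda>z. indicator J z * (T z)\<^sup>2)"
    proof (rule ind_integrable[OF \<omega>_sets Jborel \<omega>J_fin, where B="TB\<^sup>2"])
      show "(\<lambda>z. indicator J z * (T z)\<^sup>2) \<in> borel_measurable borel"
        by (rule hmeas[of "\<lambda>t. t\<^sup>2"]) (intro borel_measurable_continuous_onI continuous_intros)
      fix z assume z: "z \<in> J"
      have "\<bar>T z\<bar> \<le> \<bar>TB\<bar>" using Tb[OF z] by linarith
      then have "(T z)\<^sup>2 \<le> TB\<^sup>2" by (simp only: abs_le_square_iff)
      then show "\<bar>(T z)\<^sup>2\<bar> \<le> TB\<^sup>2" by simp
    qed
    have int0: "integrable \<omega> (\<lambda>z. indicator J z :: real)" using Jw \<omega>J_fin by auto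
    define I1 where "I1 = (\<integral>z. indicator J z * T z \<partial>\<omega>)"
    define I2 where "I2 = (\<integral>z. indicator J z * (T z)\<^sup>2 \<partial>\<omega>)"
    define G where "G t = m * t\<^sup>2 - 2 * t * I1 + I2" for t
    have Fexp: "(\<integral>z. indicator J z * (T x - T z)\<^sup>2 \<partial>\<omega>) = G (T x)" for x
    proof -
      have "(\<lambda>z. indicator J z * (T x - T z)\<^sup>2) =
          (\<lambda>z. ((T x)\<^sup>2 * indicator J z - (2 * T x) * (indicator J z * T z)) + indicator J z * (T z)\<^sup>2)"
        by (rule ext) (simp add: power2_eq_square algebra_simps)
      then have "(\<integral>z. indicator J z * (T x - T z)\<^sup>2 \<partial>\<omega>) =
          (\<integral>z. ((T x)\<^sup>2 * indicator J z - (2 * T x) * (indicator J z * T z)) + indicator J z * (T z)\<^sup>2 \<partial>\<omega>)"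
        by simp
      also have "\<dots> = (\<integral>z. (T x)\<^sup>2 * indicator J z - (2 * T x) * (indicator J z * T z) \<partial>\<omega>) + I2"
        unfolding I2_def
        by (rule Bochner_Integration.integral_add) (use int0 intT intT2 in auto)
      also have "(\<integral>z. (T x)\<^sup>2 * indicator J z - (2 * T x) * (indicator J z * T z) \<partial>\<omega>)
          = (\<integral>z. (T x)\<^sup>2 * indicator J z \<partial>\<omega>) - (\<integral>z. (2 * T x) * (indicator J z * T z) \<partial>\<omega>)"
        by (rule Bochner_Integration.integral_diff) (use int0 intT in auto)
      also have "\<dots> = (T x)\<^sup>2 * m - (2 * T x) * I1"
        unfolding I1_def m_def using Bochner_Integration.integral_indicator[where A=J and M=\<omega>] Jw \<omega>J_fin by simp
      finally show ?thesis unfolding G_def by (simp add: ac_simps)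
    qed
    have Flow: "A\<^sup>2 * V \<le> (\<integral>z. indicator J z * (T x - T z)\<^sup>2 \<partial>\<omega>)" if x: "x \<in> J" for x
    proof -
      have isq: "integrable \<omega> (\<lambda>z. indicator J z * (z - x)\<^sup>2)" by (rule ind_sq_int[OF \<omega>_sets Jborel \<omega>J_fin Jsub])
      have "A\<^sup>2 * V \<le> A\<^sup>2 * (\<integral>z. indicator J z * (z - x)\<^sup>2 \<partial>\<omega>)"
        unfolding V_def m_def by (intro mult_left_mono var_min[OF \<omega>_sets Jborel \<omega>J_fin Jsub]) (use m_pos in \<open>auto simp: m_def\<close>)
      also have "\<dots> = (\<integral>z. A\<^sup>2 * (indicator J z * (z - x)\<^sup>2) \<partial>\<omega>)" by simp
      also have "\<dots> \<le> (\<integral>z. indicator J z * (T x - T z)\<^sup>2 \<partial>\<omega>)"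
      proof (rule integral_mono)
        show "integrable \<omega> (\<lambda>z. A\<^sup>2 * (indicator J z * (z - x)\<^sup>2))" using isq by simp
        show "integrable \<omega> (\<lambda>z. indicator J z * (T x - T z)\<^sup>2)" by (rule Fint[OF x])
        fix z show "A\<^sup>2 * (indicator J z * (z - x)\<^sup>2) \<le> indicator J z * (T x - T z)\<^sup>2"
          using sqk[OF x, of z] by (cases "z \<in> J") auto
      qed
      finally show ?thesis .
    qed
    have Gint: "integrable \<omega> (\<lambda>x. indicator J x * G (T x))"
    proof (rule ind_integrable[OF \<omega>_sets Jborel \<omega>J_fin, where B="m * TB\<^sup>2 + 2 * TB * \<bar>I1\<bar> + \<bar>I2\<bar>"])
      show "(\<lambda>x. indicator J x * G (T x)) \<in> borel_measurable borel"
        by (rule hmeas) (unfold G_def, intro borel_measurable_continuous_onI continuous_intros)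
      fix x assume x: "x \<in> J"
      have t1: "(T x)\<^sup>2 \<le> TB\<^sup>2" using Tb[OF x] by (simp add: abs_le_square_iff[symmetric])
      have t2: "\<bar>T x * I1\<bar> \<le> TB * \<bar>I1\<bar>" using Tb[OF x] by (simp add: abs_mult mult_right_mono)
      have e1: "\<bar>m * (T x)\<^sup>2\<bar> = m * (T x)\<^sup>2" using m_pos by simp
      have e2: "\<bar>2 * T x * I1\<bar> = 2 * \<bar>T x * I1\<bar>" by (simp add: abs_mult)
      have "\<bar>G (T x)\<bar> \<le> \<bar>m * (T x)\<^sup>2\<bar> + \<bar>2 * T x * I1\<bar> + \<bar>I2\<bar>"
        unfolding G_def by arith
      also have "\<dots> = m * (T x)\<^sup>2 + 2 * \<bar>T x * I1\<bar> + \<bar>I2\<bar>" using e1 e2 by simp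
      also have "\<dots> \<le> m * TB\<^sup>2 + 2 * TB * \<bar>I1\<bar> + \<bar>I2\<bar>"
      proof -
        have "m * (T x)\<^sup>2 \<le> m * TB\<^sup>2" using t1 m_pos by (intro mult_left_mono) auto
        then show ?thesis using t2 by linarith
      qed
      finally show "\<bar>G (T x)\<bar> \<le> m * TB\<^sup>2 + 2 * TB * \<bar>I1\<bar> + \<bar>I2\<bar>" .
    qed
    have "LHS = (\<integral>x. indicator J x * G (T x) \<partial>\<omega>)"
      unfolding LHS_def by (rule Bochner_Integration.integral_cong) (auto simp: Fexp)
    also have "\<dots> \<ge> (\<integral>x. (A\<^sup>2 * V) * indicator J x \<partial>\<omega>)"
    proof (rule integral_mono)
      show "integrable \<omega> (\<lambda>x. (A\<^sup>2 * V) * indicator J x)" using int0 by simp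
      show "integrable \<omega> (\<lambda>x. indicator J x * G (T x))" by (rule Gint)
      fix x show "(A\<^sup>2 * V) * indicator J x \<le> indicator J x * G (T x)"
        using Flow[of x] Fexp[of x] by (cases "x \<in> J") auto
    qed
    finally have LHSge: "LHS \<ge> (A\<^sup>2 * V) * m"
      unfolding m_def using Bochner_Integration.integral_indicator[where A=J and M=\<omega>] Jw \<omega>J_fin by simp
    have PL: "poissonP J \<mu> / intlen J = Q" using P_eq L_pos unfolding L_def by simp
    have X1: "(A\<^sup>2 * V) * m = c\<^sup>2 * Q\<^sup>2 * m * V" unfolding A_def by (simp add: power_mult_distrib ac_simps)
    have X2: "c\<^sup>2 / 8 * Q\<^sup>2 * m * V = (c\<^sup>2 * Q\<^sup>2 * m * V) / 8" by simp
    have X3: "c\<^sup>2 * Q\<^sup>2 * m * V \<ge> 0" using V_nonneg m_pos by (intro mult_nonneg_nonneg) auto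
    have "c\<^sup>2 / 8 * Q\<^sup>2 * m * V \<le> (A\<^sup>2 * V) * m" unfolding X1 X2 using X3 by linarith
    then show ?thesis unfolding eqL eqR PL using LHSge unfolding m_def by linarith
  qed
qed

end
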